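(* For $d\ge2$, $V^{(1)}_{d-1}=\{v\in V_{d-1}:\alpha_{d-1}(v)=\mathrm{id}\}$ and $V^{(2)}_{d-1}=\{v\in V_{d-1}:\alpha_{0X^{d-2}}(v)=\alpha_{1X^{d-2}}(v)=\mathrm{id}\}$.
   Context: Let $X=\{0,1\}$, $G(d)$ the automorphism group of the finite binary rooted tree of words of length $\le d$; finite sections $g(wv)=g(w)g_w(v)$. $C_2=\{\mathrm{id},\sigma\}$ written additively; $\alpha(g)=\sigma$ if $g(0)=1$ and $\mathrm{id}$ otherwise; $\alpha_{(w)}(g)=\alpha(g_w)$; for finite $S$, $\alpha_S(g)=\sum_{w\in S}\alpha_{(w)}(g)$; $\alpha_k=\alpha_{X^k}$ with $X^k$ the words of length $k$; $xX^k=\{xw:w\in X^k\}$. $V_{d-1}=G(d)_{d-1}$ is the level-$(d-1)$ stabilizer of $G(d)$; $V^{(0)}_{d-1}=V_{d-1}$ and $V^{(i+1)}_{d-1}=[G(d),V^{(i)}_{d-1}]$. *)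

theory Defs
  imports "HOL-Algebra.Generated_Groups" "HOL-Library.Z2"
begin

text \<open>Vertices of the binary rooted tree: words over X = {0,1}, encoded as bool lists
  (False = 0, True = 1). The finite tree of depth d consists of the words of length at most d.\<close>

definition words_le :: "nat \<Rightarrow> bool list set" where
  "words_le d = {w. length w \<le> d}"

definition Xpow :: "nat \<Rightarrow> bool list set" where
  "Xpow k = {w. length w = k}"

definition prefixed :: "bool \<Rightarrow> nat \<Rightarrow> bool list set" where
  "prefixed x k = (\<lambda>w. x # w) ` Xpow k"

text \<open>Automorphisms of the tree of depth d: bijections of the vertex set preserving
  the length of words and the prefix relation (i.e. the tree structure); extended by the
  identity outside the tree so that equality of automorphisms is equality of functions.\<close>
definition is_tree_aut :: "nat \<Rightarrow> (bool list \<Rightarrow> bool list) \<Rightarrow> bool" where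
  "is_tree_aut d g \<longleftrightarrow>
     bij_betw g (words_le d) (words_le d)
   \<and> (\<forall>w \<in> words_le d. length (g w) = length w)
   \<and> (\<forall>u v. u @ v \<in> words_le d \<longrightarrow> (\<exists>x. g (u @ v) = g u @ x))
   \<and> (\<forall>w. w \<notin> words_le d \<longrightarrow> g w = w)"

definition Gd :: "nat \<Rightarrow> (bool list \<Rightarrow> bool list) monoid" where
  "Gd d = \<lparr> carrier = {g. is_tree_aut d g}, mult = (\<lambda>g h. g \<circ> h), one = id \<rparr>"

text \<open>Section g_w, determined by g(wv) = g(w) g_w(v).\<close>
definition tree_section :: "(bool list \<Rightarrow> bool list) \<Rightarrow> bool list \<Rightarrow> bool list \<Rightarrow> bool list" where
  "tree_section g w v = drop (length w) (g (w @ v))"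

text \<open>C_2 = {id, sigma} written additively is rendered as the type bit (Z/2):
  id = 0, sigma = 1.\<close>
definition alpha :: "(bool list \<Rightarrow> bool list) \<Rightarrow> bit" where
  "alpha g = (if g [False] = [True] then 1 else 0)"

definition alpha_at :: "bool list \<Rightarrow> (bool list \<Rightarrow> bool list) \<Rightarrow> bit" where
  "alpha_at w g = alpha (tree_section g w)"

definition alpha_S :: "bool list set \<Rightarrow> (bool list \<Rightarrow> bool list) \<Rightarrow> bit" where
  "alpha_S S g = (\<Sum>w\<in>S. alpha_at w g)"

definition level_stab :: "nat \<Rightarrow> nat \<Rightarrow> (bool list \<Rightarrow> bool list) set" where
  "level_stab d n = {g \<in> carrier (Gd d). \<forall>w. length w = n \<longrightarrow> g w = w}"

definition comm_sub :: "nat \<Rightarrow> (bool list \<Rightarrow> bool list) set \<Rightarrow> (bool list \<Rightarrow> bool list) set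
    \<Rightarrow> (bool list \<Rightarrow> bool list) set" where
  "comm_sub d A B = generate (Gd d)
     {g \<otimes>\<^bsub>Gd d\<^esub> h \<otimes>\<^bsub>Gd d\<^esub> inv\<^bsub>Gd d\<^esub> g \<otimes>\<^bsub>Gd d\<^esub> inv\<^bsub>Gd d\<^esub> h | g h. g \<in> A \<and> h \<in> B}"

text \<open>V^{(0)}_{d-1} = V_{d-1}, V^{(i+1)}_{d-1} = [G(d), V^{(i)}_{d-1}].\<close>
fun Vser :: "nat \<Rightarrow> nat \<Rightarrow> (bool list \<Rightarrow> bool list) set" where
  "Vser d 0 = level_stab d (d - 1)"
| "Vser d (Suc i) = comm_sub d (carrier (Gd d)) (Vser d i)"

end

theory Submission
  imports Defs
begin


lemma words_le_append: "u @ v \<in> words_le d \<Longrightarrow> u \<in> words_le d"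
  by (auto simp: words_le_def)

lemma tree_aut_comp:
  assumes "is_tree_aut d g" "is_tree_aut d h"
  shows "is_tree_aut d (g \<circ> h)"
proof -
  have bg: "bij_betw g (words_le d) (words_le d)" and bh: "bij_betw h (words_le d) (words_le d)"
    using assms unfolding is_tree_aut_def by blast+
  have lg: "\<And>w. w \<in> words_le d \<Longrightarrow> length (g w) = length w"
    and lh: "\<And>w. w \<in> words_le d \<Longrightarrow> length (h w) = length w"
    using assms unfolding is_tree_aut_def by blast+
  have hw: "\<And>w. w \<in> words_le d \<Longrightarrow> h w \<in> words_le d" using bh unfolding bij_betw_def by blast
  have pg: "\<And>u v. u @ v \<in> words_le d \<Longrightarrow> \<exists>x. g (u @ v) = g u @ x"
    and ph: "\<And>u v. u @ v \<in> words_le d \<Longrightarrow> \<exists>x. h (u @ v) = h u @ x"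
    using assms unfolding is_tree_aut_def by blast+
  have og: "\<And>w. w \<notin> words_le d \<Longrightarrow> g w = w" and oh: "\<And>w. w \<notin> words_le d \<Longrightarrow> h w = w"
    using assms unfolding is_tree_aut_def by blast+
  have "bij_betw (g \<circ> h) (words_le d) (words_le d)"
    by (rule bij_betw_trans[OF bh bg])
  moreover have "\<forall>w \<in> words_le d. length ((g\<circ>h) w) = length w"
  proof
    fix w assume "w \<in> words_le d"
    then show "length ((g\<circ>h) w) = length w" using lg[OF hw] lh by simp
  qed
  moreover have "\<forall>u v. u @ v \<in> words_le d \<longrightarrow> (\<exists>x. (g\<circ>h) (u @ v) = (g\<circ>h) u @ x)"
  proof (intro allI impI)
    fix u v assume uv: "u @ v \<in> words_le d"
    obtain x where x: "h (u @ v) = h u @ x" using ph[OF uv] by blast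
    have "h u @ x \<in> words_le d" using hw[OF uv] x by simp
    then obtain y where "g (h u @ x) = g (h u) @ y" using pg by blast
    then show "\<exists>x. (g\<circ>h) (u @ v) = (g\<circ>h) u @ x" using x by auto
  qed
  moreover have "\<forall>w. w \<notin> words_le d \<longrightarrow> (g\<circ>h) w = w"
    using og oh by simp
  ultimately show ?thesis unfolding is_tree_aut_def by blast
qed

definition ginv :: "nat \<Rightarrow> (bool list \<Rightarrow> bool list) \<Rightarrow> bool list \<Rightarrow> bool list" where
  "ginv d g = (\<lambda>w. if w \<in> words_le d then inv_into (words_le d) g w else w)"

lemma ginv_in: "w \<in> words_le d \<Longrightarrow> ginv d g w = inv_into (words_le d) g w"
  unfolding ginv_def by simp

lemma ginv_out: "w \<notin> words_le d \<Longrightarrow> ginv d g w = w"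
  unfolding ginv_def by simp

lemma ginv_left: assumes "is_tree_aut d g" shows "ginv d g \<circ> g = id"
proof
  fix w
  have i: "inj_on g (words_le d)" and im: "g ` words_le d = words_le d"
    using assms unfolding is_tree_aut_def bij_betw_def by blast+
  show "(ginv d g \<circ> g) w = id w"
  proof (cases "w \<in> words_le d")
    case True
    then have "g w \<in> words_le d" using im by blast
    then have "ginv d g (g w) = inv_into (words_le d) g (g w)" by (rule ginv_in)
    also have "\<dots> = w" using inv_into_f_f[OF i True] .
    finally show ?thesis by simp
  next
    case False
    then have "g w = w" using assms unfolding is_tree_aut_def by blast
    then show ?thesis using ginv_out[OF False] by simp
  qed
qed

lemma tree_aut_ginv: assumes "is_tree_aut d g" shows "is_tree_aut d (ginv d g)"
proof -
  have b: "bij_betw g (words_le d) (words_le d)" using assms unfolding is_tree_aut_def by blast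
  have i: "inj_on g (words_le d)" and im: "g ` words_le d = words_le d"
    using b unfolding bij_betw_def by blast+
  have len: "\<And>w. w \<in> words_le d \<Longrightarrow> length (g w) = length w" using assms unfolding is_tree_aut_def by blast
  have pre: "\<And>u v. u @ v \<in> words_le d \<Longrightarrow> \<exists>x. g (u @ v) = g u @ x" using assms unfolding is_tree_aut_def by blast
  have bi: "bij_betw (ginv d g) (words_le d) (words_le d)"
  proof -
    have "bij_betw (inv_into (words_le d) g) (words_le d) (words_le d)" using b by (rule bij_betw_inv_into)
    moreover have "bij_betw (ginv d g) (words_le d) (words_le d) = bij_betw (inv_into (words_le d) g) (words_le d) (words_le d)"
      by (rule bij_betw_cong) (rule ginv_in)
    ultimately show ?thesis by simp
  qed
  have gi: "\<And>w. w \<in> words_le d \<Longrightarrow> g (ginv d g w) = w \<and> ginv d g w \<in> words_le d"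
  proof -
    fix w assume w: "w \<in> words_le d"
    then have w': "w \<in> g ` words_le d" using im by simp
    show "g (ginv d g w) = w \<and> ginv d g w \<in> words_le d"
      unfolding ginv_in[OF w] using f_inv_into_f[OF w'] inv_into_into[OF w'] by simp
  qed
  have l2: "\<forall>w \<in> words_le d. length (ginv d g w) = length w"
  proof
    fix w assume w: "w \<in> words_le d"
    have "length (g (ginv d g w)) = length (ginv d g w)" using len gi[OF w] by blast
    then show "length (ginv d g w) = length w" using gi[OF w] by simp
  qed
  have l3: "\<forall>u v. u @ v \<in> words_le d \<longrightarrow> (\<exists>x. ginv d g (u @ v) = ginv d g u @ x)"
  proof (intro allI impI)
    fix u v assume uv: "u @ v \<in> words_le d"
    define a where "a = ginv d g (u @ v)"
    have ga: "g a = u @ v" "a \<in> words_le d" using gi[OF uv] a_def by auto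
    have la: "length a = length u + length v" using l2 uv a_def by auto
    define p where "p = take (length u) a"
    define q where "q = drop (length u) a"
    have ap: "a = p @ q" unfolding p_def q_def by simp
    have pw: "p \<in> words_le d" using words_le_append[of p q d] ga(2) ap by simp
    obtain y where gy: "g (p @ q) = g p @ y" using pre[of p q] ga(2) ap by blast
    have lp: "length (g p) = length u" using len[OF pw] la unfolding p_def by simp
    have "g p @ y = u @ v" using gy ga(1) ap by simp
    then have "g p = u" using lp by (simp add: append_eq_append_conv)
    then have "inv_into (words_le d) g u = p" using inv_into_f_f[OF i pw] by simp
    then have "ginv d g u = p" using ginv_in[OF pw] \<open>g p = u\<close> ginv_in[OF words_le_append[OF uv]] by simp
    then show "\<exists>x. ginv d g (u @ v) = ginv d g u @ x" using ap a_def by (intro exI[of _ q]) simp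
  qed
  have l4: "\<forall>w. w \<notin> words_le d \<longrightarrow> ginv d g w = w" using ginv_out by blast
  show ?thesis unfolding is_tree_aut_def using bi l2 l3 l4 by blast
qed

lemma group_Gd: "group (Gd d)"
proof (rule groupI)
  show "\<one>\<^bsub>Gd d\<^esub> \<in> carrier (Gd d)"
    by (simp add: Gd_def is_tree_aut_def)
next
  fix x assume "x \<in> carrier (Gd d)"
  show "\<exists>y\<in>carrier (Gd d). y \<otimes>\<^bsub>Gd d\<^esub> x = \<one>\<^bsub>Gd d\<^esub>"
  proof (rule bexI[where x="ginv d x"])
    show "ginv d x \<otimes>\<^bsub>Gd d\<^esub> x = \<one>\<^bsub>Gd d\<^esub>"
      using ginv_left \<open>x \<in> carrier (Gd d)\<close> by (simp add: Gd_def)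
    show "ginv d x \<in> carrier (Gd d)"
      using tree_aut_ginv \<open>x \<in> carrier (Gd d)\<close> by (simp add: Gd_def)
  qed
next
  fix x y assume "x \<in> carrier (Gd d)" "y \<in> carrier (Gd d)"
  then show "x \<otimes>\<^bsub>Gd d\<^esub> y \<in> carrier (Gd d)" by (simp add: Gd_def tree_aut_comp)
next
  fix x y z
  show "x \<otimes>\<^bsub>Gd d\<^esub> y \<otimes>\<^bsub>Gd d\<^esub> z = x \<otimes>\<^bsub>Gd d\<^esub> (y \<otimes>\<^bsub>Gd d\<^esub> z)"
    by (simp add: Gd_def comp_assoc)
next
  fix x show "\<one>\<^bsub>Gd d\<^esub> \<otimes>\<^bsub>Gd d\<^esub> x = x" by (simp add: Gd_def)
qed



definition flip :: "nat \<Rightarrow> bool list set \<Rightarrow> bool list \<Rightarrow> bool list" where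
  "flip d S w = (if length w = d \<and> butlast w \<in> S then butlast w @ [\<not> last w] else w)"

lemma flip_comp: assumes "d \<ge> 1" shows "flip d S \<circ> flip d T = flip d ((S - T) \<union> (T - S))"
proof
  fix w show "(flip d S \<circ> flip d T) w = flip d ((S - T) \<union> (T - S)) w"
  proof (cases "length w = d")
    case True
    then have "w \<noteq> []" using assms by auto
    then have "butlast (butlast w @ [\<not> last w]) = butlast w" "last (butlast w @ [\<not> last w]) = (\<not> last w)"
      "length (butlast w @ [\<not> last w]) = length w" "butlast w @ [last w] = w" by auto
    then show ?thesis using True unfolding flip_def by auto
  qed (auto simp: flip_def)
qed

lemma flip_empty: "flip d {} = id"
  by (auto simp: flip_def)

lemma flip_len: "d \<ge> 1 \<Longrightarrow> length (flip d S w) = length w"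
  by (auto simp: flip_def)

lemma flip_invol: "d \<ge> 1 \<Longrightarrow> flip d S (flip d S w) = w"
  using flip_comp[of d S S] flip_empty by (metis Diff_cancel Un_absorb comp_apply id_apply)

lemma flip_aut: assumes "d \<ge> 1" shows "is_tree_aut d (flip d S)"
proof -
  have m: "flip d S ` words_le d \<subseteq> words_le d" using flip_len[OF assms] by (auto simp: words_le_def)
  have b: "bij_betw (flip d S) (words_le d) (words_le d)"
    by (rule bij_betw_byWitness[where f'="flip d S"]) (use flip_invol[OF assms] m in auto)
  have p: "\<forall>u v. u @ v \<in> words_le d \<longrightarrow> (\<exists>x. flip d S (u @ v) = flip d S u @ x)"
  proof (intro allI impI)
    fix u v assume uv: "u @ v \<in> words_le d"
    show "\<exists>x. flip d S (u @ v) = flip d S u @ x"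
    proof (cases "v = []")
      case True then show ?thesis by auto
    next
      case False
      then have "length u \<noteq> d" using uv by (auto simp: words_le_def)
      then have fu: "flip d S u = u" by (auto simp: flip_def)
      show ?thesis using fu False \<open>length u \<noteq> d\<close> by (auto simp: flip_def butlast_append)
    qed
  qed
  show ?thesis unfolding is_tree_aut_def using b p flip_len[OF assms]
    by (auto simp: flip_def words_le_def)
qed

lemma flip_stab: assumes "d \<ge> 1" shows "flip d S \<in> level_stab d (d - 1)"
  using flip_aut[OF assms] assms by (auto simp: level_stab_def Gd_def flip_def)

lemma aut_len: "is_tree_aut d g \<Longrightarrow> w \<in> words_le d \<Longrightarrow> length (g w) = length w"
  unfolding is_tree_aut_def by blast

lemma aut_pre: "is_tree_aut d g \<Longrightarrow> u @ v \<in> words_le d \<Longrightarrow> \<exists>x. g (u @ v) = g u @ x"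
  unfolding is_tree_aut_def by blast

lemma aut_out: "is_tree_aut d g \<Longrightarrow> w \<notin> words_le d \<Longrightarrow> g w = w"
  unfolding is_tree_aut_def by blast

lemma aut_inj: "is_tree_aut d g \<Longrightarrow> inj_on g (words_le d)"
  unfolding is_tree_aut_def bij_betw_def by blast

lemma aut_last: assumes "is_tree_aut d g" "length w < d"
  shows "\<exists>c. g (w @ [b]) = g w @ [c]"
proof -
  have "w @ [b] \<in> words_le d" using assms by (auto simp: words_le_def)
  then obtain x where x: "g (w @ [b]) = g w @ x" using aut_pre[OF assms(1)] by blast
  have "length (g (w@[b])) = length w + 1" "length (g w) = length w"
    using aut_len[OF assms(1)] \<open>w @ [b] \<in> words_le d\<close> assms(2) by (auto simp: words_le_def)
  then have "length x = 1" using x by simp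
  then obtain c where "x = [c]" by (metis One_nat_def length_0_conv length_Suc_conv)
  then show ?thesis using x by blast
qed

lemma aut_last_flip: assumes "is_tree_aut d g" "length w < d" "g (w @ [b]) = g w @ [c]"
  shows "g (w @ [\<not> b]) = g w @ [\<not> c]"
proof -
  obtain c' where c': "g (w @ [\<not>b]) = g w @ [c']" using aut_last[OF assms(1,2)] by blast
  have "w @ [b] \<in> words_le d" "w @ [\<not>b] \<in> words_le d" using assms by (auto simp: words_le_def)
  then have "g (w @ [\<not>b]) \<noteq> g (w @ [b])" using aut_inj[OF assms(1)] by (metis inj_on_contraD list.inject not_Cons_self2 same_append_eq)
  then show ?thesis using c' assms(3) by (cases c; cases c') auto
qed

lemma stab_short: assumes "v \<in> level_stab d n" "n \<le> d" "length x \<le> n" shows "v x = x"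
proof -
  have a: "is_tree_aut d v" and f: "\<And>w. length w = n \<Longrightarrow> v w = w" using assms by (auto simp: level_stab_def Gd_def)
  define r where "r = replicate (n - length x) False"
  have l: "length (x @ r) = n" using assms(3) unfolding r_def by simp
  then have xr: "x @ r \<in> words_le d" using assms(2) by (simp add: words_le_def)
  obtain y where y: "v (x @ r) = v x @ y" using aut_pre[OF a xr] by blast
  have "length (v x) = length x" using aut_len[OF a] words_le_append[OF xr] by blast
  then show ?thesis using y f[OF l] by (metis append_eq_append_conv)
qed

lemma last_split: assumes "d \<ge> 1" "length x = d"
  shows "x = butlast x @ [last x]" "length (butlast x) = d - 1"
proof -
  have "x \<noteq> []" using assms by auto
  then show "x = butlast x @ [last x]" by simp
  show "length (butlast x) = d - 1" using assms by simp
qed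

lemma stab_is_flip: assumes "d \<ge> 1" "v \<in> level_stab d (d - 1)"
  shows "\<exists>S \<subseteq> Xpow (d - 1). v = flip d S"
proof -
  have a: "is_tree_aut d v" using assms by (auto simp: level_stab_def Gd_def)
  define S where "S = {w \<in> Xpow (d - 1). v (w @ [False]) = w @ [True]}"
  have "v = flip d S"
  proof
    fix x :: "bool list"
    consider "length x < d" | "length x > d" | "length x = d" by linarith
    then show "v x = flip d S x"
    proof cases
      case 1
      then have "v x = x" using stab_short[OF assms(2)] by simp
      moreover have "flip d S x = x" using 1 by (simp add: flip_def)
      ultimately show ?thesis by simp
    next
      case 2
      then have "x \<notin> words_le d" by (simp add: words_le_def)
      then have "v x = x" using aut_out[OF a] by blast
      moreover have "flip d S x = x" using 2 by (simp add: flip_def)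
      ultimately show ?thesis by simp
    next
      case 3
      define w where "w = butlast x"
      define b where "b = last x"
      have xw: "x = w @ [b]" "length w = d - 1"
        unfolding w_def b_def by (rule last_split[OF assms(1) 3])+
      have lw: "length w < d" using xw assms(1) by simp
      have vw: "v w = w" using stab_short[OF assms(2)] xw by simp
      obtain c where c0: "v (w @ [False]) = v w @ [c]" using aut_last[OF a lw] by blast
      have c: "v (w @ [False]) = w @ [c]" using c0 vw by simp
      have c20: "v (w @ [\<not> False]) = v w @ [\<not>c]" by (rule aut_last_flip[OF a lw c0])
      have c2: "v (w @ [True]) = w @ [\<not>c]" using c20 vw by simp
      have wX: "w \<in> Xpow (d - 1)" using xw by (simp add: Xpow_def)
      have fl: "flip d S x = (if w \<in> S then w @ [\<not> b] else w @ [b])"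
        using 3 unfolding flip_def w_def[symmetric] b_def[symmetric] by (subst xw(1)) simp
      have wS: "w \<in> S \<longleftrightarrow> c" using c wX unfolding S_def by simp
      have "v x = v (w @ [b])" using xw(1) by simp
      show ?thesis
      proof (cases b)
        case True
        have "v x = w @ [\<not> c]" using c2 xw(1) True by simp
        moreover have "flip d S x = w @ [\<not> c]" using fl wS True by (cases c) simp_all
        ultimately show ?thesis by simp
      next
        case False
        have "v x = w @ [c]" using c xw(1) False by simp
        moreover have "flip d S x = w @ [c]" using fl wS False by (cases c) simp_all
        ultimately show ?thesis by simp
      qed
    qed
  qed
  moreover have "S \<subseteq> Xpow (d - 1)" unfolding S_def by blast
  ultimately show ?thesis by blast
qed

lemma conj_flip:
  assumes "d \<ge> 1" "g \<in> carrier (Gd d)" "S \<subseteq> Xpow (d - 1)"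
  shows "g \<circ> flip d S = flip d (g ` S) \<circ> g"
proof
  have a: "is_tree_aut d g" using assms by (auto simp: Gd_def)
  fix x
  show "(g \<circ> flip d S) x = (flip d (g ` S) \<circ> g) x"
  proof (cases "x \<in> words_le d")
    case False then show ?thesis using aut_out[OF a] by (auto simp: flip_def words_le_def)
  next
    case True
    show ?thesis
    proof (cases "length x = d")
      case False then show ?thesis using aut_len[OF a True] by (auto simp: flip_def)
    next
      case 3: True
      define w where "w = butlast x"
      have xw: "x = w @ [last x]" "length w = d - 1"
        unfolding w_def by (rule last_split[OF assms(1) 3])+
      have lw: "length w < d" using xw assms(1) by simp
      obtain c where c: "g (w @ [last x]) = g w @ [c]" using aut_last[OF a lw] by metis
      have c2: "g (w @ [\<not> last x]) = g w @ [\<not>c]" using aut_last_flip[OF a lw c] .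
      have lg: "length (g w) = d - 1" using aut_len[OF a] lw xw by (auto simp: words_le_def)
      have wS: "g w \<in> g ` S \<longleftrightarrow> w \<in> S"
      proof
        assume "g w \<in> g ` S"
        then obtain y where y: "y \<in> S" "g w = g y" by blast
        have "y \<in> words_le d" "w \<in> words_le d" using y(1) assms(3) lw by (auto simp: Xpow_def words_le_def)
        then have "w = y" using aut_inj[OF a] y(2) by (meson inj_onD)
        then show "w \<in> S" using y by simp
      qed auto
      show ?thesis using c c2 xw lg wS assms(1) 3 unfolding flip_def
        by (auto simp: w_def[symmetric])
    qed
  qed
qed

lemma finite_Xpow: "finite (Xpow k)"
  unfolding Xpow_def using finite_lists_length_eq[of "UNIV :: bool set"] by simp

lemma alpha_at_flip: assumes "d \<ge> 1" "length w = d - 1"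
  shows "alpha_at w (flip d S) = (if w \<in> S then 1 else 0)"
  using assms unfolding alpha_at_def alpha_def tree_section_def flip_def by auto

lemma alpha_S_flip: assumes "d \<ge> 1" "A \<subseteq> Xpow (d - 1)"
  shows "alpha_S A (flip d S) = of_nat (card (A \<inter> S))"
proof -
  have fA: "finite A" using finite_Xpow assms(2) finite_subset by blast
  have "alpha_S A (flip d S) = (\<Sum>w\<in>A. (if w \<in> S then 1 else 0 :: bit))"
    unfolding alpha_S_def using alpha_at_flip[OF assms(1)] assms(2)
    by (intro sum.cong) (auto simp: Xpow_def)
  also have "\<dots> = (\<Sum>w\<in>A \<inter> S. 1)" using sum.inter_restrict[OF fA, of "\<lambda>_. 1::bit" S] by simp
  also have "\<dots> = of_nat (card (A \<inter> S))" by simp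
  finally show ?thesis .
qed



definition xorw :: "bool list \<Rightarrow> bool list \<Rightarrow> bool list" where
  "xorw c w = map (\<lambda>i. w ! i \<noteq> (i < length c \<and> c ! i)) [0..<length w]"

lemma xorw_len[simp]: "length (xorw c w) = length w" by (simp add: xorw_def)
lemma xorw_nth: "i < length w \<Longrightarrow> xorw c w ! i = (w ! i \<noteq> (i < length c \<and> c ! i))"
  by (simp add: xorw_def)
lemma xorw_invol: "xorw c (xorw c w) = w"
  by (rule nth_equalityI) (auto simp: xorw_nth)
lemma xorw_ab: "length a = length b \<Longrightarrow> xorw (xorw b a) a = b"
  by (rule nth_equalityI) (auto simp: xorw_nth)
lemma xorw_take: "take (length u) (xorw c (u @ v)) = xorw c u"
  by (rule nth_equalityI) (auto simp: xorw_nth nth_append)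

definition xg :: "nat \<Rightarrow> bool set \<Rightarrow> bool list \<Rightarrow> bool list \<Rightarrow> bool list" where
  "xg d T c w = (if length w \<le> d \<and> (w = [] \<or> w ! 0 \<in> T) then xorw c w else w)"

lemma xg_invol: assumes "T = UNIV \<or> c = [] \<or> \<not> c ! 0" shows "xg d T c (xg d T c w) = w"
proof (cases "length w \<le> d \<and> (w = [] \<or> w ! 0 \<in> T)")
  case True
  have "length (xorw c w) \<le> d \<and> (xorw c w = [] \<or> xorw c w ! 0 \<in> T)"
  proof (cases "w = []")
    case True then show ?thesis using \<open>length w \<le> d \<and> _\<close> by (simp add: xorw_def)
  next
    case False
    then have "xorw c w ! 0 = (w ! 0 \<noteq> (0 < length c \<and> c ! 0))" by (simp add: xorw_nth)
    then show ?thesis using \<open>length w \<le> d \<and> _\<close> assms False by auto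
  qed
  then show ?thesis using True by (simp add: xg_def xorw_invol)
next
  case False
  then have "xg d T c w = w" unfolding xg_def by meson
  then show ?thesis by simp
qed

lemma xg_len: "length (xg d T c w) = length w" by (simp add: xg_def)

lemma xg_aut: assumes "T = UNIV \<or> c = [] \<or> \<not> c ! 0" shows "xg d T c \<in> carrier (Gd d)"
proof -
  have m: "xg d T c ` words_le d \<subseteq> words_le d" by (auto simp: words_le_def xg_len)
  have b: "bij_betw (xg d T c) (words_le d) (words_le d)"
    by (rule bij_betw_byWitness[where f'="xg d T c"]) (use xg_invol[OF assms] m in auto)
  have p: "\<forall>u v. u @ v \<in> words_le d \<longrightarrow> (\<exists>x. xg d T c (u @ v) = xg d T c u @ x)"
  proof (intro allI impI)
    fix u v assume uv: "u @ v \<in> words_le d"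
    show "\<exists>x. xg d T c (u @ v) = xg d T c u @ x"
    proof (cases "u = []")
      case True then show ?thesis by (auto simp: xg_def xorw_def)
    next
      case False
      have lu: "length u \<le> d" using uv by (auto simp: words_le_def)
      have h0: "(u @ v) ! 0 = u ! 0" using False by (simp add: nth_append)
      show ?thesis
      proof (cases "u ! 0 \<in> T")
        case True
        have "xg d T c (u @ v) = xorw c (u @ v)" "xg d T c u = xorw c u"
          using True h0 lu uv by (auto simp: xg_def words_le_def)
        then show ?thesis using xorw_take[of u c v] by (metis append_take_drop_id)
      next
        case F: False
        have "xg d T c (u @ v) = u @ v" "xg d T c u = u"
          using F h0 False by (auto simp: xg_def)
        then show ?thesis by auto
      qed
    qed
  qed
  show ?thesis unfolding Gd_def is_tree_aut_def using b p
    by (auto simp: xg_len xg_def words_le_def)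
qed

lemma bit_add_self: "(x::bit) + x = 0"
  by (cases "x = 0") auto

lemma par_D: assumes "finite S" "finite T"
  shows "(of_nat (card ((S - T) \<union> (T - S))) :: bit) = of_nat (card S) + of_nat (card T)"
proof -
  have a1: "card (S - T) = card S - card (S \<inter> T)" using assms by (simp add: card_Diff_subset_Int)
  have a2: "card (T - S) = card T - card (S \<inter> T)" using assms by (simp add: card_Diff_subset_Int Int_commute)
  have b1: "card (S \<inter> T) \<le> card S" "card (S \<inter> T) \<le> card T" using assms by (simp_all add: card_mono)
  have c: "card ((S - T) \<union> (T - S)) = card (S - T) + card (T - S)"
    using assms by (intro card_Un_disjoint) auto
  have "card S + card T = card ((S - T) \<union> (T - S)) + (card (S \<inter> T) + card (S \<inter> T))"
    using a1 a2 b1 c by linarith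
  then have "(of_nat (card S + card T) :: bit) = of_nat (card ((S - T) \<union> (T - S)) + (card (S \<inter> T) + card (S \<inter> T)))"
    by (rule arg_cong)
  then show ?thesis by (simp only: of_nat_add bit_add_self add_0_right)
qed

lemma Gd_mult: "x \<otimes>\<^bsub>Gd d\<^esub> y = x \<circ> y" by (simp add: Gd_def)
lemma Gd_one: "\<one>\<^bsub>Gd d\<^esub> = id" by (simp add: Gd_def)

lemma bit_cases: "(x::bit) = 0 \<or> x = 1" using bit_not_zero_iff by blast

lemma flip_in_carrier: "d \<ge> 1 \<Longrightarrow> flip d S \<in> carrier (Gd d)"
  using flip_stab by (auto simp: level_stab_def)

lemma flip_inv: assumes "d \<ge> 1" shows "inv\<^bsub>Gd d\<^esub> (flip d S) = flip d S"
proof -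
  have G: "group (Gd d)" by (rule group_Gd)
  have c: "flip d S \<in> carrier (Gd d)" by (rule flip_in_carrier[OF assms])
  have "flip d S \<otimes>\<^bsub>Gd d\<^esub> flip d S = \<one>\<^bsub>Gd d\<^esub>"
    unfolding Gd_mult Gd_one flip_comp[OF assms] by (simp add: flip_empty)
  then show ?thesis using group.inv_equality[OF G _ c c] by blast
qed

lemma commutator_flip:
  assumes "d \<ge> 1" "g \<in> carrier (Gd d)" "S \<subseteq> Xpow (d - 1)"
  shows "mult (Gd d) (mult (Gd d) (mult (Gd d) g (flip d S)) (m_inv (Gd d) g)) (m_inv (Gd d) (flip d S))
         = flip d ((g ` S - S) \<union> (S - g ` S))"
proof -
  have G: "group (Gd d)" by (rule group_Gd)
  have gi: "g \<circ> m_inv (Gd d) g = id" using group.r_inv[OF G assms(2)] by (simp only: Gd_mult Gd_one)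
  have "mult (Gd d) (mult (Gd d) (mult (Gd d) g (flip d S)) (m_inv (Gd d) g)) (m_inv (Gd d) (flip d S))
      = ((g \<circ> flip d S) \<circ> m_inv (Gd d) g) \<circ> flip d S"
    unfolding flip_inv[OF assms(1)] Gd_mult by (rule refl)
  also have "\<dots> = flip d (g ` S) \<circ> (g \<circ> m_inv (Gd d) g) \<circ> flip d S"
    using conj_flip[OF assms] by (simp add: o_assoc)
  also have "\<dots> = flip d ((g ` S - S) \<union> (S - g ` S))" using gi flip_comp[OF assms(1)] by simp
  finally show ?thesis .
qed

lemma even_gen:
  assumes "d \<ge> 1" "finite Y" "id \<in> H" "\<And>x y. x \<in> H \<Longrightarrow> y \<in> H \<Longrightarrow> x \<circ> y \<in> H"
    "\<And>a b. a \<in> Y \<Longrightarrow> b \<in> Y \<Longrightarrow> a \<noteq> b \<Longrightarrow> flip d {a, b} \<in> H"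
  shows "S \<subseteq> Y \<Longrightarrow> (of_nat (card S) :: bit) = 0 \<Longrightarrow> flip d S \<in> H"
proof (induction "card S" arbitrary: S rule: less_induct)
  case less
  have fS: "finite S" using less.prems assms(2) finite_subset by blast
  show ?case
  proof (cases "S = {}")
    case True then show ?thesis using assms(3) flip_empty by simp
  next
    case False
    then obtain a where a: "a \<in> S" by blast
    have "card S \<noteq> 1" using less.prems(2) by auto
    then have "S \<noteq> {a}" by auto
    then obtain b where b: "b \<in> S" "b \<noteq> a" using a by blast
    define S' where "S' = S - {a, b}"
    have cS: "card S' < card S"
      by (rule psubset_card_mono[OF fS]) (use a in \<open>auto simp: S'_def\<close>)
    have fS': "finite S'" using fS S'_def by simp
    have SD: "S = ({a, b} - S') \<union> (S' - {a, b})" using a b unfolding S'_def by auto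
    have "(of_nat (card S) :: bit) = of_nat (card (({a, b} - S') \<union> (S' - {a, b})))"
      using SD by (rule arg_cong)
    also have "\<dots> = of_nat (card {a,b}) + of_nat (card S')"
      using par_D[of "{a,b}" S', OF _ fS'] by simp
    finally have "(of_nat (card S) :: bit) = of_nat (card {a,b}) + of_nat (card S')" .
    then have p': "(of_nat (card S') :: bit) = 0" using less.prems(2) b(2) by simp
    have "flip d S' \<in> H" using less.hyps[OF cS _ p'] less.prems(1) S'_def by auto
    moreover have "flip d {a, b} \<in> H" using assms(5) a b less.prems(1) by auto
    ultimately have "flip d {a,b} \<circ> flip d S' \<in> H" using assms(4) by blast
    then show ?thesis using flip_comp[OF assms(1), of "{a,b}" S'] SD by metis
  qed
qed



definition Fl :: "nat \<Rightarrow> (bool list set \<Rightarrow> bool) \<Rightarrow> (bool list \<Rightarrow> bool list) set" where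
  "Fl d P = {flip d S | S. S \<subseteq> Xpow (d - 1) \<and> P S}"

lemma Fl_subgroup:
  assumes d: "d \<ge> 1" and P0: "P {}"
    and PD: "\<And>S T. S \<subseteq> Xpow (d - 1) \<Longrightarrow> T \<subseteq> Xpow (d - 1) \<Longrightarrow> P S \<Longrightarrow> P T \<Longrightarrow> P ((S - T) \<union> (T - S))"
  shows "subgroup (Fl d P) (Gd d)"
proof (rule group.subgroupI[OF group_Gd])
  show "Fl d P \<subseteq> carrier (Gd d)" unfolding Fl_def using flip_in_carrier[OF d] by blast
  show "Fl d P \<noteq> {}" unfolding Fl_def using P0 by blast
next
  fix a assume "a \<in> Fl d P"
  then show "inv\<^bsub>Gd d\<^esub> a \<in> Fl d P" unfolding Fl_def using flip_inv[OF d] by auto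
next
  fix a b assume "a \<in> Fl d P" "b \<in> Fl d P"
  then obtain S T where S: "a = flip d S" "S \<subseteq> Xpow (d - 1)" "P S" and T: "b = flip d T" "T \<subseteq> Xpow (d - 1)" "P T"
    unfolding Fl_def by blast
  have "a \<otimes>\<^bsub>Gd d\<^esub> b = flip d ((S - T) \<union> (T - S))" using S T flip_comp[OF d] by (simp add: Gd_mult)
  moreover have "(S - T) \<union> (T - S) \<subseteq> Xpow (d - 1)" using S T by blast
  ultimately show "a \<otimes>\<^bsub>Gd d\<^esub> b \<in> Fl d P" unfolding Fl_def using PD[OF S(2) T(2) S(3) T(3)] by blast
qed

lemma stab_eq: assumes d: "d \<ge> 1"
  shows "level_stab d (d - 1) = {flip d S | S. S \<subseteq> Xpow (d - 1)}"
  using stab_is_flip[OF d] flip_stab[OF d] by blast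

lemma rhs_eq:
  assumes d: "d \<ge> 1" and Q: "\<And>S. S \<subseteq> Xpow (d - 1) \<Longrightarrow> Q (flip d S) = P S"
  shows "{v \<in> level_stab d (d - 1). Q v} = Fl d P"
  unfolding stab_eq[OF d] Fl_def using Q by blast

lemma image_X: assumes d: "d \<ge> 1" and g: "g \<in> carrier (Gd d)" and S: "S \<subseteq> Xpow (d - 1)"
  shows "g ` S \<subseteq> Xpow (d - 1)" "card (g ` S) = card S"
proof -
  have a: "is_tree_aut d g" using g by (simp add: Gd_def)
  have SW: "S \<subseteq> words_le d" using S by (auto simp: Xpow_def words_le_def)
  show "g ` S \<subseteq> Xpow (d - 1)"
  proof
    fix z assume "z \<in> g ` S"
    then obtain w where w: "w \<in> S" "z = g w" by blast
    then have "length (g w) = length w" using aut_len[OF a] SW by blast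
    then show "z \<in> Xpow (d - 1)" using w S by (auto simp: Xpow_def)
  qed
  show "card (g ` S) = card S" using card_image[OF inj_on_subset[OF aut_inj[OF a] SW]] .
qed

lemma finite_subX: "S \<subseteq> Xpow k \<Longrightarrow> finite S"
  using finite_Xpow finite_subset by blast

lemma comm_in:
  assumes "g \<in> carrier (Gd d)" "h \<in> H" "x = g \<otimes>\<^bsub>Gd d\<^esub> h \<otimes>\<^bsub>Gd d\<^esub> inv\<^bsub>Gd d\<^esub> g \<otimes>\<^bsub>Gd d\<^esub> inv\<^bsub>Gd d\<^esub> h"
  shows "x \<in> comm_sub d (carrier (Gd d)) H"
  unfolding comm_sub_def using assms by (intro generate.incl) blast

lemma gen_id: "id \<in> comm_sub d A B"
  unfolding comm_sub_def using generate.one[of "Gd d"] by (simp add: Gd_one)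

lemma gen_comp: "x \<in> comm_sub d A B \<Longrightarrow> y \<in> comm_sub d A B \<Longrightarrow> x \<circ> y \<in> comm_sub d A B"
  unfolding comm_sub_def using generate.eng[of x "Gd d" _ y] by (simp add: Gd_mult)

lemma pair_D: "a \<noteq> b \<Longrightarrow> ({b} - {a}) \<union> ({a} - {b}) = {a, b}" by auto

lemma part1: assumes d: "d \<ge> 1"
  shows "Vser d 1 = Fl d (\<lambda>S. (of_nat (card S) :: bit) = 0)"
proof -
  let ?P = "\<lambda>S. (of_nat (card S) :: bit) = 0"
  have V1: "Vser d 1 = comm_sub d (carrier (Gd d)) (level_stab d (d - 1))" by simp
  have sg: "subgroup (Fl d ?P) (Gd d)"
  proof (rule Fl_subgroup[OF d])
    fix S T assume "S \<subseteq> Xpow (d - 1)" "T \<subseteq> Xpow (d - 1)" "?P S" "?P T"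
    then show "?P ((S - T) \<union> (T - S))" using par_D[of S T] finite_subX by simp
  qed simp
  show ?thesis
  proof
    show "Vser d 1 \<subseteq> Fl d ?P"
      unfolding V1 comm_sub_def
    proof (rule group.generate_subgroup_incl[OF group_Gd _ sg])
      show "{g \<otimes>\<^bsub>Gd d\<^esub> h \<otimes>\<^bsub>Gd d\<^esub> inv\<^bsub>Gd d\<^esub> g \<otimes>\<^bsub>Gd d\<^esub> inv\<^bsub>Gd d\<^esub> h |g h.
          g \<in> carrier (Gd d) \<and> h \<in> level_stab d (d - 1)} \<subseteq> Fl d ?P"
      proof
        fix x assume "x \<in> {g \<otimes>\<^bsub>Gd d\<^esub> h \<otimes>\<^bsub>Gd d\<^esub> inv\<^bsub>Gd d\<^esub> g \<otimes>\<^bsub>Gd d\<^esub> inv\<^bsub>Gd d\<^esub> h |g h.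
          g \<in> carrier (Gd d) \<and> h \<in> level_stab d (d - 1)}"
        then obtain g h where gh: "x = g \<otimes>\<^bsub>Gd d\<^esub> h \<otimes>\<^bsub>Gd d\<^esub> inv\<^bsub>Gd d\<^esub> g \<otimes>\<^bsub>Gd d\<^esub> inv\<^bsub>Gd d\<^esub> h"
          "g \<in> carrier (Gd d)" "h \<in> level_stab d (d - 1)" by blast
        obtain S where S: "S \<subseteq> Xpow (d - 1)" "h = flip d S" using stab_is_flip[OF d gh(3)] by blast
        have x: "x = flip d ((g ` S - S) \<union> (S - g ` S))" using commutator_flip[OF d gh(2) S(1)] gh(1) S(2) by simp
        have gS: "g ` S \<subseteq> Xpow (d - 1)" "card (g ` S) = card S" using image_X[OF d gh(2) S(1)] by auto
        have "?P ((g ` S - S) \<union> (S - g ` S))"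
          using par_D[of "g ` S" S] finite_subX[OF gS(1)] finite_subX[OF S(1)] gS(2) bit_add_self by simp
        moreover have "(g ` S - S) \<union> (S - g ` S) \<subseteq> Xpow (d - 1)" using gS S by blast
        ultimately show "x \<in> Fl d ?P" unfolding Fl_def using x by blast
      qed
    qed
  next
    show "Fl d ?P \<subseteq> Vser d 1"
    proof
      fix x assume "x \<in> Fl d ?P"
      then obtain S where S: "x = flip d S" "S \<subseteq> Xpow (d - 1)" "?P S" unfolding Fl_def by blast
      have "flip d S \<in> Vser d 1"
      proof (rule even_gen[OF d finite_Xpow])
        show "id \<in> Vser d 1" unfolding V1 by (rule gen_id)
        show "\<And>x y. x \<in> Vser d 1 \<Longrightarrow> y \<in> Vser d 1 \<Longrightarrow> x \<circ> y \<in> Vser d 1" unfolding V1 by (rule gen_comp)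
        show "S \<subseteq> Xpow (d - 1)" "?P S" using S by auto
      next
        fix a b assume ab: "a \<in> Xpow (d - 1)" "b \<in> Xpow (d - 1)" "a \<noteq> b"
        define g where "g = xg d UNIV (xorw b a)"
        have g: "g \<in> carrier (Gd d)" unfolding g_def by (rule xg_aut) simp
        have ga: "g a = b" using ab d unfolding g_def xg_def Xpow_def by (simp add: xorw_ab)
        have a1: "{a} \<subseteq> Xpow (d - 1)" using ab by simp
        have "g \<otimes>\<^bsub>Gd d\<^esub> flip d {a} \<otimes>\<^bsub>Gd d\<^esub> inv\<^bsub>Gd d\<^esub> g \<otimes>\<^bsub>Gd d\<^esub> inv\<^bsub>Gd d\<^esub> (flip d {a}) = flip d {a, b}"
          using commutator_flip[OF d g a1] ga pair_D[OF ab(3)] by simp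
        then show "flip d {a, b} \<in> Vser d 1" unfolding V1
          by (intro comm_in[OF g flip_stab[OF d, of "{a}"]]) simp
      qed
      then show "x \<in> Vser d 1" using S by simp
    qed
  qed
qed



lemma prefixed_char: assumes "d \<ge> 2"
  shows "prefixed x (d - 2) = {w \<in> Xpow (d - 1). w ! 0 = x}"
proof
  show "prefixed x (d - 2) \<subseteq> {w \<in> Xpow (d - 1). w ! 0 = x}"
    using assms by (auto simp: prefixed_def Xpow_def)
next
  show "{w \<in> Xpow (d - 1). w ! 0 = x} \<subseteq> prefixed x (d - 2)"
  proof
    fix w assume w: "w \<in> {w \<in> Xpow (d - 1). w ! 0 = x}"
    then have "w \<noteq> []" using assms by (auto simp: Xpow_def)
    then have "w = hd w # tl w" by simp
    moreover have "hd w = x" using w \<open>w \<noteq> []\<close> by (simp add: hd_conv_nth)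
    moreover have "tl w \<in> Xpow (d - 2)" using w by (simp add: Xpow_def)
    ultimately have "w = x # tl w" "tl w \<in> Xpow (d - 2)" by simp_all
    then show "w \<in> prefixed x (d - 2)" unfolding prefixed_def by (rule image_eqI)
  qed
qed

lemma root_perm: assumes d: "d \<ge> 2" and g: "g \<in> carrier (Gd d)"
  shows "\<exists>s. (\<forall>x. s (\<not> x) = (\<not> s x)) \<and> (\<forall>w \<in> Xpow (d - 1). g w \<in> Xpow (d - 1) \<and> g w ! 0 = s (w ! 0))"
proof -
  have a: "is_tree_aut d g" using g by (simp add: Gd_def)
  have l0: "length ([]::bool list) < d" using d by simp
  have g0: "g [] = []" using aut_len[OF a, of "[]"] by (simp add: words_le_def)
  define s where "s x = g [x] ! 0" for x
  have gx: "g [x] = [s x]" for x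
  proof -
    obtain c where "g ([] @ [x]) = g [] @ [c]" using aut_last[OF a l0] by blast
    then show ?thesis using g0 unfolding s_def by simp
  qed
  have sn: "s (\<not> x) = (\<not> s x)" for x
    using aut_last_flip[OF a l0, of x "s x"] gx g0 by simp
  have "g w \<in> Xpow (d - 1) \<and> g w ! 0 = s (w ! 0)" if w: "w \<in> Xpow (d - 1)" for w
  proof -
    have "w \<noteq> []" using w d by (auto simp: Xpow_def)
    then have ww: "w = [w ! 0] @ tl w" by (cases w) auto
    have wW: "w \<in> words_le d" using w by (simp add: Xpow_def words_le_def)
    obtain y where "g ([w ! 0] @ tl w) = g [w ! 0] @ y" using aut_pre[OF a] wW ww by metis
    then have "g w ! 0 = s (w ! 0)" using ww gx by (metis append_Cons append_Nil nth_Cons_0)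
    moreover have "length (g w) = length w" using aut_len[OF a wW] .
    ultimately show ?thesis using w by (simp add: Xpow_def)
  qed
  then show ?thesis using sn by blast
qed

lemma half_par: assumes d: "d \<ge> 2" and T: "T \<subseteq> Xpow (d - 1)" and p: "(of_nat (card T) :: bit) = 0"
  shows "(of_nat (card (prefixed x (d - 2) \<inter> T)) :: bit) = of_nat (card (prefixed y (d - 2) \<inter> T))"
proof -
  have main: "(of_nat (card (prefixed False (d - 2) \<inter> T)) :: bit) = of_nat (card (prefixed True (d - 2) \<inter> T))"
  proof -
    let ?A = "prefixed False (d - 2) \<inter> T" and ?B = "prefixed True (d - 2) \<inter> T"
    have TU: "T = (?A - ?B) \<union> (?B - ?A)" using T unfolding prefixed_char[OF d] by auto
    have fA: "finite ?A" "finite ?B" using finite_subX[OF T] by auto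
    have "(0::bit) = of_nat (card ((?A - ?B) \<union> (?B - ?A)))" using p TU by simp
    also have "\<dots> = of_nat (card ?A) + of_nat (card ?B)" by (rule par_D[OF fA])
    finally show ?thesis using bit_cases[of "of_nat (card ?A)"] bit_cases[of "of_nat (card ?B)"] by auto
  qed
  show ?thesis using main by (cases x; cases y) simp_all
qed

lemma key_par: assumes d: "d \<ge> 2" and g: "g \<in> carrier (Gd d)" and T: "T \<subseteq> Xpow (d - 1)"
  and p: "(of_nat (card T) :: bit) = 0"
  shows "(of_nat (card (prefixed y (d - 2) \<inter> g ` T)) :: bit) = of_nat (card (prefixed y (d - 2) \<inter> T))"
proof -
  have d1: "d \<ge> 1" using d by simp
  obtain s where sn: "\<And>x. s (\<not> x) = (\<not> s x)" and sw: "\<And>w. w \<in> Xpow (d - 1) \<Longrightarrow> g w \<in> Xpow (d - 1) \<and> g w ! 0 = s (w ! 0)"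
    using root_perm[OF d g] by blast
  define x where "x = (if s False = y then False else True)"
  have sx: "s t = y \<longleftrightarrow> t = x" for t using sn[of False] unfolding x_def by (cases t; cases "s False"; cases y) auto
  have eq: "prefixed y (d - 2) \<inter> g ` T = g ` (prefixed x (d - 2) \<inter> T)"
  proof
    show "prefixed y (d - 2) \<inter> g ` T \<subseteq> g ` (prefixed x (d - 2) \<inter> T)"
    proof
      fix z assume "z \<in> prefixed y (d - 2) \<inter> g ` T"
      then obtain t where t: "t \<in> T" "z = g t" "z ! 0 = y" unfolding prefixed_char[OF d] by blast
      then have "t ! 0 = x" using sw[of t] T sx by auto
      then show "z \<in> g ` (prefixed x (d - 2) \<inter> T)" using t T unfolding prefixed_char[OF d] by blast
    qed
  next
    show "g ` (prefixed x (d - 2) \<inter> T) \<subseteq> prefixed y (d - 2) \<inter> g ` T"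
    proof
      fix z assume "z \<in> g ` (prefixed x (d - 2) \<inter> T)"
      then obtain t where t: "t \<in> T" "z = g t" "t ! 0 = x" "t \<in> Xpow (d - 1)" unfolding prefixed_char[OF d] by blast
      then have "z \<in> Xpow (d - 1)" "z ! 0 = y" using sw[of t] sx by auto
      then show "z \<in> prefixed y (d - 2) \<inter> g ` T" using t unfolding prefixed_char[OF d] by blast
    qed
  qed
  have sub: "prefixed x (d - 2) \<inter> T \<subseteq> Xpow (d - 1)" using T by blast
  have "card (prefixed y (d - 2) \<inter> g ` T) = card (prefixed x (d - 2) \<inter> T)"
    unfolding eq using image_X(2)[OF d1 g sub] .
  then show ?thesis using half_par[OF d T p, of x y] by simp
qed



lemma par_int: assumes "finite S" "finite T"
  shows "(of_nat (card (A \<inter> ((S - T) \<union> (T - S)))) :: bit) = of_nat (card (A \<inter> S)) + of_nat (card (A \<inter> T))"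
proof -
  have "A \<inter> ((S - T) \<union> (T - S)) = ((A \<inter> S) - (A \<inter> T)) \<union> ((A \<inter> T) - (A \<inter> S))" by blast
  then show ?thesis using par_D[of "A \<inter> S" "A \<inter> T"] assms by simp
qed

lemma pair2:
  assumes d: "d \<ge> 2" and ab: "a \<in> prefixed y (d - 2)" "b \<in> prefixed y (d - 2)" "a \<noteq> b"
  shows "flip d {a, b} \<in> comm_sub d (carrier (Gd d)) (Vser d 1)"
proof -
  have d1: "d \<ge> 1" using d by simp
  have aX: "a \<in> Xpow (d - 1)" "a ! 0 = y" and bX: "b \<in> Xpow (d - 1)" "b ! 0 = y"
    using ab unfolding prefixed_char[OF d] by auto
  have la: "length a = d - 1" "length b = d - 1" using aX bX by (auto simp: Xpow_def)
  have a0: "a \<noteq> []" using la d by auto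
  define c where "c = xorw b a"
  have c0: "\<not> c ! 0" unfolding c_def using a0 la aX bX d by (simp add: xorw_nth)
  define g where "g = xg d {y} c"
  have g: "g \<in> carrier (Gd d)" unfolding g_def using c0 by (intro xg_aut) simp
  have ga: "g a = b" unfolding g_def c_def xg_def using a0 aX la by (simp add: xorw_ab)
  define u where "u = (\<not> y) # replicate (d - 2) False"
  have uX: "u \<in> Xpow (d - 1)" unfolding u_def Xpow_def using d by simp
  have u0: "u ! 0 = (\<not> y)" unfolding u_def by simp
  have gu: "g u = u" unfolding g_def xg_def using u0 unfolding u_def by simp
  have ua: "u \<noteq> a" "u \<noteq> b" using u0 aX bX by auto
  have auX: "{a, u} \<subseteq> Xpow (d - 1)" using aX uX by simp
  have "card {a, u} = 2" using ua by simp
  then have "flip d {a, u} \<in> Fl d (\<lambda>S. (of_nat (card S) :: bit) = 0)"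
    unfolding Fl_def using auX by auto
  then have h: "flip d {a, u} \<in> Vser d 1" using part1[OF d1] by simp
  have "({b, u} - {a, u}) \<union> ({a, u} - {b, u}) = {a, b}" using ua ab(3) by auto
  then have "g \<otimes>\<^bsub>Gd d\<^esub> flip d {a, u} \<otimes>\<^bsub>Gd d\<^esub> inv\<^bsub>Gd d\<^esub> g \<otimes>\<^bsub>Gd d\<^esub> inv\<^bsub>Gd d\<^esub> (flip d {a, u}) = flip d {a, b}"
    using commutator_flip[OF d1 g auX] ga gu by simp
  then show ?thesis by (intro comm_in[OF g h]) simp
qed

lemma part2: assumes d: "d \<ge> 2"
  shows "Vser d 2 = Fl d (\<lambda>S. (of_nat (card (prefixed False (d - 2) \<inter> S)) :: bit) = 0
                              \<and> (of_nat (card (prefixed True (d - 2) \<inter> S)) :: bit) = 0)"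
proof -
  have d1: "d \<ge> 1" using d by simp
  let ?P = "\<lambda>S. (of_nat (card (prefixed False (d - 2) \<inter> S)) :: bit) = 0
                              \<and> (of_nat (card (prefixed True (d - 2) \<inter> S)) :: bit) = 0"
  have V2: "Vser d 2 = comm_sub d (carrier (Gd d)) (Vser d 1)" by (simp add: numeral_2_eq_2)
  have sg: "subgroup (Fl d ?P) (Gd d)"
  proof (rule Fl_subgroup[OF d1])
    fix S T assume ST: "S \<subseteq> Xpow (d - 1)" "T \<subseteq> Xpow (d - 1)" "?P S" "?P T"
    have f: "finite S" "finite T" using finite_subX ST(1,2) by auto
    show "?P ((S - T) \<union> (T - S))"
      using par_int[OF f, of "prefixed False (d - 2)"] par_int[OF f, of "prefixed True (d - 2)"] ST(3,4) by simp
  qed simp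
  show ?thesis
  proof
    show "Vser d 2 \<subseteq> Fl d ?P"
      unfolding V2 comm_sub_def
    proof (rule group.generate_subgroup_incl[OF group_Gd _ sg])
      show "{g \<otimes>\<^bsub>Gd d\<^esub> h \<otimes>\<^bsub>Gd d\<^esub> inv\<^bsub>Gd d\<^esub> g \<otimes>\<^bsub>Gd d\<^esub> inv\<^bsub>Gd d\<^esub> h |g h.
          g \<in> carrier (Gd d) \<and> h \<in> Vser d 1} \<subseteq> Fl d ?P"
      proof
        fix x assume "x \<in> {g \<otimes>\<^bsub>Gd d\<^esub> h \<otimes>\<^bsub>Gd d\<^esub> inv\<^bsub>Gd d\<^esub> g \<otimes>\<^bsub>Gd d\<^esub> inv\<^bsub>Gd d\<^esub> h |g h.
          g \<in> carrier (Gd d) \<and> h \<in> Vser d 1}"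
        then obtain g h where gh: "x = g \<otimes>\<^bsub>Gd d\<^esub> h \<otimes>\<^bsub>Gd d\<^esub> inv\<^bsub>Gd d\<^esub> g \<otimes>\<^bsub>Gd d\<^esub> inv\<^bsub>Gd d\<^esub> h"
          "g \<in> carrier (Gd d)" "h \<in> Vser d 1" by blast
        obtain T where T: "h = flip d T" "T \<subseteq> Xpow (d - 1)" "(of_nat (card T) :: bit) = 0"
          using gh(3) unfolding part1[OF d1] Fl_def by blast
        have x: "x = flip d ((g ` T - T) \<union> (T - g ` T))" using commutator_flip[OF d1 gh(2) T(2)] gh(1) T(1) by simp
        have gT: "g ` T \<subseteq> Xpow (d - 1)" using image_X[OF d1 gh(2) T(2)] by auto
        have fin: "finite (g ` T)" "finite T" using finite_subX[OF gT] finite_subX[OF T(2)] by auto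
        have "(of_nat (card (prefixed y (d - 2) \<inter> ((g ` T - T) \<union> (T - g ` T)))) :: bit) = 0" for y
          using par_int[OF fin, of "prefixed y (d - 2)"] key_par[OF d gh(2) T(2) T(3), of y] bit_add_self by simp
        then have "?P ((g ` T - T) \<union> (T - g ` T))" by blast
        moreover have "(g ` T - T) \<union> (T - g ` T) \<subseteq> Xpow (d - 1)" using gT T by blast
        ultimately show "x \<in> Fl d ?P" unfolding Fl_def using x by blast
      qed
    qed
  next
    show "Fl d ?P \<subseteq> Vser d 2"
    proof
      fix x assume "x \<in> Fl d ?P"
      then obtain S where S: "x = flip d S" "S \<subseteq> Xpow (d - 1)" "?P S" unfolding Fl_def by blast
      have half: "flip d (prefixed y (d - 2) \<inter> S) \<in> Vser d 2"
        if py: "(of_nat (card (prefixed y (d - 2) \<inter> S)) :: bit) = 0" for y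
      proof (rule even_gen[OF d1])
        show "finite (prefixed y (d - 2))" unfolding prefixed_def using finite_Xpow by simp
        show "id \<in> Vser d 2" unfolding V2 by (rule gen_id)
        show "\<And>x y. x \<in> Vser d 2 \<Longrightarrow> y \<in> Vser d 2 \<Longrightarrow> x \<circ> y \<in> Vser d 2" unfolding V2 by (rule gen_comp)
        show "prefixed y (d - 2) \<inter> S \<subseteq> prefixed y (d - 2)" by blast
        show "(of_nat (card (prefixed y (d - 2) \<inter> S)) :: bit) = 0" by (rule py)
        show "\<And>a b. a \<in> prefixed y (d - 2) \<Longrightarrow> b \<in> prefixed y (d - 2) \<Longrightarrow> a \<noteq> b \<Longrightarrow> flip d {a, b} \<in> Vser d 2"
          unfolding V2 by (rule pair2[OF d])
      qed
      have SU: "S = ((prefixed False (d - 2) \<inter> S) - (prefixed True (d - 2) \<inter> S))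
                  \<union> ((prefixed True (d - 2) \<inter> S) - (prefixed False (d - 2) \<inter> S))"
        using S(2) unfolding prefixed_char[OF d] by auto
      have "flip d (prefixed False (d - 2) \<inter> S) \<circ> flip d (prefixed True (d - 2) \<inter> S) \<in> Vser d 2"
        using half S(3) unfolding V2 by (intro gen_comp) (simp_all add: V2)
      then show "x \<in> Vser d 2" using S(1) SU flip_comp[OF d1] by metis
    qed
  qed
qed

theorem mainTheorem14:
  fixes d :: nat
  assumes "d \<ge> 2"
  shows "Vser d 1 = {v \<in> level_stab d (d - 1). alpha_S (Xpow (d - 1)) v = 0}
       \<and> Vser d 2 = {v \<in> level_stab d (d - 1).
            alpha_S (prefixed False (d - 2)) v = 0 \<and> alpha_S (prefixed True (d - 2)) v = 0}"
proof
  have d1: "d \<ge> 1" using assms by simp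
  have AX: "prefixed x (d - 2) \<subseteq> Xpow (d - 1)" for x unfolding prefixed_char[OF assms] by blast
  show "Vser d 1 = {v \<in> level_stab d (d - 1). alpha_S (Xpow (d - 1)) v = 0}"
    unfolding part1[OF d1]
    by (rule rhs_eq[OF d1, symmetric]) (simp add: alpha_S_flip[OF d1] Int_absorb1)
  show "Vser d 2 = {v \<in> level_stab d (d - 1).
            alpha_S (prefixed False (d - 2)) v = 0 \<and> alpha_S (prefixed True (d - 2)) v = 0}"
    unfolding part2[OF assms]
    by (rule rhs_eq[OF d1, symmetric]) (simp add: alpha_S_flip[OF d1 AX])
qed

end
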